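(* Let $G$ be a threshold graph with an odd number of vertices. If $h(\mathrm{seq}(G))=0$, then $G$ has a near-perfect matching, i.e., a matching covering all vertices but one.
   Context: A threshold graph on $n\ge1$ vertices is built from a base vertex $v_0$ by successively adding $v_1,\dots,v_{n-1}$, each either isolated (adjacent to no earlier vertex) or dominating (adjacent to all earlier vertices); its creation sequence $\mathrm{seq}(G)=s_1\cdots s_{n-1}$ has $s_i=1$ if $v_i$ is dominating and $s_i=0$ otherwise. For a binary string $s=s_1\cdots s_m$ and $0\le k\le m$, the $k$-th tail is $s_{m-k+1}\cdots s_m$ (empty for $k=0$); $z_k(s)$, $u_k(s)$ are the numbers of zeros and ones in it, and $h(s)=\max_{0\le k\le m}\{z_k(s)-u_k(s)\}$. *)

theory Defs
  imports Main
begin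

text \<open>A graph is given by a vertex set V and an adjacency relation E.
  threshold_seq V E s: the graph (V,E) is a threshold graph built from v_0 by adding
  v_1,...,v_m (m = length s), where v_j is dominating iff s!(j-1) (s_j = 1)
  and isolated otherwise; so s is its creation sequence.\<close>
definition threshold_seq :: "'a set \<Rightarrow> ('a \<Rightarrow> 'a \<Rightarrow> bool) \<Rightarrow> bool list \<Rightarrow> bool" where
  "threshold_seq V E s \<longleftrightarrow>
     (\<exists>v. bij_betw v {..length s} V \<and>
        (\<forall>x. \<not> E x x) \<and>
        (\<forall>i j. i < j \<and> j \<le> length s \<longrightarrow>
           (E (v i) (v j) \<longleftrightarrow> s ! (j - 1)) \<and> (E (v j) (v i) \<longleftrightarrow> s ! (j - 1))))"

definition tail_seq :: "nat \<Rightarrow> bool list \<Rightarrow> bool list" where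
  "tail_seq k s = drop (length s - k) s"

definition zeros :: "nat \<Rightarrow> bool list \<Rightarrow> nat" where
  "zeros k s = length (filter (\<lambda>b. \<not> b) (tail_seq k s))"

definition ones :: "nat \<Rightarrow> bool list \<Rightarrow> nat" where
  "ones k s = length (filter (\<lambda>b. b) (tail_seq k s))"

definition hval :: "bool list \<Rightarrow> int" where
  "hval s = Max ((\<lambda>k. int (zeros k s) - int (ones k s)) ` {0..length s})"

definition is_matching :: "'a set \<Rightarrow> ('a \<Rightarrow> 'a \<Rightarrow> bool) \<Rightarrow> 'a set set \<Rightarrow> bool" where
  "is_matching V E M \<longleftrightarrow>
     (\<forall>e\<in>M. \<exists>x y. e = {x, y} \<and> x \<noteq> y \<and> x \<in> V \<and> y \<in> V \<and> E x y) \<and>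
     (\<forall>e\<in>M. \<forall>e'\<in>M. e \<noteq> e' \<longrightarrow> e \<inter> e' = {})"

definition near_perfect_matching :: "'a set \<Rightarrow> ('a \<Rightarrow> 'a \<Rightarrow> bool) \<Rightarrow> 'a set set \<Rightarrow> bool" where
  "near_perfect_matching V E M \<longleftrightarrow> is_matching V E M \<and> card (V - \<Union>M) = 1"

end

theory Submission
  imports Defs
begin

definition adj :: "bool list \<Rightarrow> nat \<Rightarrow> nat \<Rightarrow> bool" where
  "adj s i j \<longleftrightarrow> (i < j \<and> j \<le> length s \<and> s ! (j - 1)) \<or> (j < i \<and> i \<le> length s \<and> s ! (i - 1))"

definition c0 :: "bool list \<Rightarrow> nat" where "c0 t = length (filter (\<lambda>b. \<not> b) t)"
definition c1 :: "bool list \<Rightarrow> nat" where "c1 t = length (filter (\<lambda>b. b) t)"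

fun ballot :: "bool list \<Rightarrow> bool" where
  "ballot [] = True"
| "ballot (b # t) = (ballot t \<and> c0 (b # t) \<le> c1 (b # t))"

lemma adj_Suc: "adj (b # t) (Suc i) (Suc j) = adj t i j"
  unfolding adj_def by (auto simp: nth_Cons split: nat.splits)

lemma adj_1: "adj (b # t) 1 (Suc j) = adj t 0 j"
  unfolding adj_def by (auto simp: nth_Cons split: nat.splits)

lemma diff_Suc_img: "{..Suc n} - Suc ` S = insert 0 (Suc ` ({..n} - S))"
  apply (rule set_eqI)
  subgoal for u by (cases u) auto
  done

lemma match_Suc:
  assumes "is_matching {..n} (adj t) M"
  shows "is_matching {..Suc n} (adj (b # t)) ((`) Suc ` M)"
proof -
  have "\<forall>e\<in>(`) Suc ` M. \<exists>x y. e = {x, y} \<and> x \<noteq> y \<and> x \<in> {..Suc n} \<and> y \<in> {..Suc n} \<and> adj (b # t) x y"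
  proof
    fix e assume "e \<in> (`) Suc ` M"
    then obtain e0 where "e0 \<in> M" "e = Suc ` e0" by auto
    then obtain x y where "e0 = {x, y}" "x \<noteq> y" "x \<le> n" "y \<le> n" "adj t x y"
      using assms unfolding is_matching_def by auto
    then show "\<exists>x y. e = {x, y} \<and> x \<noteq> y \<and> x \<in> {..Suc n} \<and> y \<in> {..Suc n} \<and> adj (b # t) x y"
      using \<open>e = Suc ` e0\<close> by (intro exI[of _ "Suc x"] exI[of _ "Suc y"]) (auto simp: adj_Suc)
  qed
  moreover have "\<forall>e\<in>(`) Suc ` M. \<forall>e'\<in>(`) Suc ` M. e \<noteq> e' \<longrightarrow> e \<inter> e' = {}"
  proof (intro ballI impI)
    fix e e' assume "e \<in> (`) Suc ` M" "e' \<in> (`) Suc ` M" "e \<noteq> e'"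
    then obtain e0 e0' where "e0 \<in> M" "e0' \<in> M" "e = Suc ` e0" "e' = Suc ` e0'" "e0 \<noteq> e0'" by auto
    then have "e0 \<inter> e0' = {}" using assms unfolding is_matching_def by blast
    then show "e \<inter> e' = {}" using \<open>e = Suc ` e0\<close> \<open>e' = Suc ` e0'\<close> by auto
  qed
  ultimately show ?thesis unfolding is_matching_def by blast
qed

lemma core:
  "ballot t \<Longrightarrow> \<exists>M. is_matching {..length t} (adj t) M \<and> 0 \<notin> \<Union>M \<and>
     (\<forall>u\<in>{..length t} - \<Union>M. u = 0 \<or> t ! (u - 1)) \<and>
     card ({..length t} - \<Union>M) + c0 t = 1 + c1 t"
proof (induction t)
  case Nil
  then show ?case by (intro exI[of _ "{}"]) (auto simp: is_matching_def c0_def c1_def)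
next
  case (Cons b t)
  let ?n = "length t"
  from Cons obtain M where M: "is_matching {..?n} (adj t) M" "0 \<notin> \<Union>M"
    "\<forall>u\<in>{..?n} - \<Union>M. u = 0 \<or> t ! (u - 1)"
    "card ({..?n} - \<Union>M) + c0 t = 1 + c1 t" by auto
  define U where "U = {..?n} - \<Union>M"
  have fU: "finite U" unfolding U_def by auto
  have U0: "0 \<in> U" using M(2) unfolding U_def by auto
  define M1 where "M1 = (`) Suc ` M"
  have M1m: "is_matching {..Suc ?n} (adj (b # t)) M1" unfolding M1_def by (rule match_Suc[OF M(1)])
  have UM1: "\<Union>M1 = Suc ` \<Union>M" unfolding M1_def by auto
  have U1: "{..Suc ?n} - \<Union>M1 = insert 0 (Suc ` U)" unfolding UM1 U_def by (rule diff_Suc_img)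
  show ?case
  proof (cases b)
    case True
    have c: "card (insert 0 (Suc ` U)) = Suc (card U)" using fU by (simp add: card_image)
    have pr: "\<forall>u\<in>insert 0 (Suc ` U). u = 0 \<or> (b # t) ! (u - 1)"
    proof
      fix u assume "u \<in> insert 0 (Suc ` U)"
      then consider "u = 0" | x where "x \<in> U" "u = Suc x" by auto
      then show "u = 0 \<or> (b # t) ! (u - 1)"
      proof cases
        case (2 x)
        then show ?thesis using M(3) True unfolding U_def by (cases x) auto
      qed auto
    qed
    show ?thesis
      apply (rule exI[of _ M1])
      using M1m U1 c pr M(4) True unfolding U_def[symmetric]
      by (auto simp: UM1 c0_def c1_def nth_Cons U_def split: nat.splits)
  next
    case False
    have "c0 t + 1 \<le> c1 t" using Cons.prems False by (simp add: c0_def c1_def)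
    then have "card U \<ge> 2" using M(4) unfolding U_def by simp
    then obtain w where w: "w \<in> U" "w \<noteq> 0"
    proof -
      have "\<not> card U \<le> Suc 0" using \<open>card U \<ge> 2\<close> by simp
      then obtain a c where "a \<in> U" "c \<in> U" "a \<noteq> c" using card_le_Suc0_iff_eq[OF fU] by blast
      then show ?thesis using that by (cases "a = 0") auto
    qed
    have wt: "t ! (w - 1)" "w \<le> ?n" using w M(3) unfolding U_def by auto
    have wM: "w \<notin> \<Union>M" using w unfolding U_def by auto
    define M' where "M' = insert {1, Suc w} M1"
    have adjw: "adj (b # t) 1 (Suc w)" using adj_1[of b t w] wt w(2) by (simp add: adj_def)
    have match: "is_matching {..Suc ?n} (adj (b # t)) M'"
      unfolding is_matching_def
    proof (intro conjI ballI impI)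
      fix e assume "e \<in> M'"
      then consider "e = {1, Suc w}" | "e \<in> M1" unfolding M'_def by blast
      then show "\<exists>x y. e = {x, y} \<and> x \<noteq> y \<and> x \<in> {..Suc ?n} \<and> y \<in> {..Suc ?n} \<and> adj (b # t) x y"
      proof cases
        case 1
        then show ?thesis using adjw wt w(2) by (intro exI[of _ 1] exI[of _ "Suc w"]) auto
      next
        case 2
        then show ?thesis using M1m unfolding is_matching_def by blast
      qed
    next
      fix e e' assume ee: "e \<in> M'" "e' \<in> M'" "e \<noteq> e'"
      have xyM: "1 \<notin> \<Union>M1" "Suc w \<notin> \<Union>M1" using M(2) wM unfolding UM1 by auto
      show "e \<inter> e' = {}"
      proof (cases "e = {1, Suc w}")
        case True
        then have "e' \<in> M1" using ee unfolding M'_def by auto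
        then show ?thesis using True xyM by blast
      next
        case False
        then have "e \<in> M1" using ee unfolding M'_def by auto
        show ?thesis
        proof (cases "e' = {1, Suc w}")
          case True
          then show ?thesis using \<open>e \<in> M1\<close> xyM by blast
        next
          case False
          then have "e' \<in> M1" using ee unfolding M'_def by auto
          then show ?thesis using \<open>e \<in> M1\<close> ee(3) M1m unfolding is_matching_def by blast
        qed
      qed
    qed
    have UM': "{..Suc ?n} - \<Union>M' = insert 0 (Suc ` (U - {0, w}))"
    proof -
      have "{..Suc ?n} - \<Union>M' = ({..Suc ?n} - \<Union>M1) - {1, Suc w}" unfolding M'_def by auto
      also have "\<dots> = insert 0 (Suc ` U) - {1, Suc w}" using U1 by simp
      also have "\<dots> = insert 0 (Suc ` (U - {0, w}))" by auto
      finally show ?thesis .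
    qed
    have c: "card (insert 0 (Suc ` (U - {0, w}))) + 1 = card U"
    proof -
      have "card (insert 0 (Suc ` (U - {0, w}))) = Suc (card (Suc ` (U - {0, w})))"
        using fU by (intro card_insert_disjoint) auto
      also have "card (Suc ` (U - {0, w})) = card (U - {0, w})" by (simp add: card_image)
      also have "card (U - {0, w}) = card U - 2"
        using fU w U0 by (simp add: card_Diff_subset)
      finally show ?thesis using \<open>card U \<ge> 2\<close> by simp
    qed
    show ?thesis
      apply (rule exI[of _ M'])
      using match UM' c M(4) M(3) False unfolding U_def[symmetric]
      by (auto simp: UM1 M'_def c0_def c1_def nth_Cons U_def split: nat.splits)
  qed
qed

lemma clique:
  "finite U \<Longrightarrow> is_matching V A M \<Longrightarrow> U \<subseteq> V \<Longrightarrow> U \<inter> \<Union>M = {} \<Longrightarrow>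
   (\<forall>x\<in>U. \<forall>y\<in>U. x \<noteq> y \<longrightarrow> A x y) \<Longrightarrow>
   \<exists>M'. is_matching V A M' \<and> \<Union>M \<subseteq> \<Union>M' \<and> card (U - \<Union>M') = card U mod 2"
proof (induction "card U" arbitrary: U M rule: less_induct)
  case less
  show ?case
  proof (cases "card U < 2")
    case True
    then show ?thesis using less.prems by (intro exI[of _ M]) (auto simp: Diff_triv)
  next
    case False
    then have "\<not> card U \<le> Suc 0" by simp
    then obtain x y where xy: "x \<in> U" "y \<in> U" "x \<noteq> y"
      using card_le_Suc0_iff_eq[OF less.prems(1)] by blast
    define M2 where "M2 = insert {x, y} M"
    define U2 where "U2 = U - {x, y}"
    have cU2: "card U2 = card U - 2" unfolding U2_def using xy less.prems(1)
      by (simp add: card_Diff_subset)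
    have m2: "is_matching V A M2"
      unfolding is_matching_def
    proof (intro conjI ballI impI)
      fix e assume "e \<in> M2"
      then consider "e = {x, y}" | "e \<in> M" unfolding M2_def by blast
      then show "\<exists>a b. e = {a, b} \<and> a \<noteq> b \<and> a \<in> V \<and> b \<in> V \<and> A a b"
      proof cases
        case 1
        have "A x y" using less.prems(5) xy by blast
        moreover have "x \<in> V" "y \<in> V" using less.prems(3) xy by auto
        ultimately show ?thesis using 1 xy(3) by blast
      next
        case 2
        then show ?thesis using less.prems(2) unfolding is_matching_def by blast
      qed
    next
      fix e e' assume ee: "e \<in> M2" "e' \<in> M2" "e \<noteq> e'"
      have xyM: "x \<notin> \<Union>M" "y \<notin> \<Union>M" using less.prems(4) xy by auto
      show "e \<inter> e' = {}"
      proof (cases "e = {x, y}")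
        case True
        then have "e' \<in> M" using ee unfolding M2_def by auto
        then show ?thesis using True xyM by blast
      next
        case False
        then have "e \<in> M" using ee unfolding M2_def by auto
        show ?thesis
        proof (cases "e' = {x, y}")
          case True
          then show ?thesis using \<open>e \<in> M\<close> xyM by blast
        next
          case False
          then have "e' \<in> M" using ee unfolding M2_def by auto
          then show ?thesis using \<open>e \<in> M\<close> ee(3) less.prems(2) unfolding is_matching_def by blast
        qed
      qed
    qed
    have "card U2 < card U" using cU2 False by simp
    moreover have "finite U2" using less.prems(1) unfolding U2_def by simp
    moreover have "U2 \<subseteq> V" using less.prems(3) unfolding U2_def by blast
    moreover have "U2 \<inter> \<Union>M2 = {}" using less.prems(4) unfolding U2_def M2_def by auto
    moreover have "\<forall>a\<in>U2. \<forall>b\<in>U2. a \<noteq> b \<longrightarrow> A a b" using less.prems(5) unfolding U2_def by blast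
    ultimately have "\<exists>M'. is_matching V A M' \<and> \<Union>M2 \<subseteq> \<Union>M' \<and> card (U2 - \<Union>M') = card U2 mod 2"
      using less.hyps m2 by blast
    then obtain M' where M': "is_matching V A M'" "\<Union>M2 \<subseteq> \<Union>M'" "card (U2 - \<Union>M') = card U2 mod 2"
      by blast
    have "U - \<Union>M' = U2 - \<Union>M'" using M'(2) unfolding U2_def M2_def by auto
    moreover have "card U2 mod 2 = card U mod 2" using cU2 False
    proof -
      have "card U = card U2 + 2" using cU2 False by simp
      then show ?thesis by simp
    qed
    ultimately show ?thesis using M' unfolding M2_def by auto
  qed
qed

lemma ballot_drop: "ballot s \<longleftrightarrow> (\<forall>k\<le>length s. c0 (drop k s) \<le> c1 (drop k s))"
proof (induction s)
  case Nil
  then show ?case by (simp add: c0_def c1_def)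
next
  case (Cons b t)
  have "(\<forall>k\<le>length (b # t). c0 (drop k (b # t)) \<le> c1 (drop k (b # t))) \<longleftrightarrow>
        c0 (b # t) \<le> c1 (b # t) \<and> (\<forall>k\<le>length t. c0 (drop k t) \<le> c1 (drop k t))"
    (is "?L \<longleftrightarrow> ?R")
  proof
    assume ?L
    then show ?R by (metis drop0 drop_Suc_Cons le0 length_Cons Suc_le_mono)
  next
    assume ?R
    then show ?L by (metis drop0 drop_Suc_Cons length_Cons Suc_le_mono not0_implies_Suc)
  qed
  then show ?case using Cons by auto
qed

lemma hval_ballot:
  assumes "hval s = 0" shows "ballot s"
  unfolding ballot_drop
proof (intro allI impI)
  fix k assume k: "k \<le> length s"
  define j where "j = length s - k"
  have jin: "j \<in> {0..length s}" unfolding j_def by auto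
  have "int (zeros j s) - int (ones j s) \<le> hval s"
    unfolding hval_def by (rule Max_ge) (use jin in auto)
  moreover have "length s - j = k" unfolding j_def using k by simp
  ultimately show "c0 (drop k s) \<le> c1 (drop k s)"
    using assms by (simp add: zeros_def ones_def tail_seq_def c0_def c1_def)
qed

lemma match_edge: "is_matching V A M \<Longrightarrow> e \<in> M \<Longrightarrow> \<exists>x y. e = {x, y} \<and> x \<noteq> y \<and> x \<in> V \<and> y \<in> V \<and> A x y"
  unfolding is_matching_def by simp

lemma match_disj: "is_matching V A M \<Longrightarrow> e \<in> M \<Longrightarrow> e' \<in> M \<Longrightarrow> e \<noteq> e' \<Longrightarrow> e \<inter> e' = {}"
  unfolding is_matching_def by simp

lemma match_sub: "is_matching V A M \<Longrightarrow> \<Union>M \<subseteq> V"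
proof
  fix x assume m: "is_matching V A M" and "x \<in> \<Union>M"
  then obtain e where e: "e \<in> M" "x \<in> e" by auto
  from match_edge[OF m e(1)] obtain a b where "e = {a, b}" "a \<in> V" "b \<in> V" by blast
  then show "x \<in> V" using e(2) by auto
qed

theorem mainTheorem5:
  fixes V :: "'a set" and E :: "'a \<Rightarrow> 'a \<Rightarrow> bool" and s :: "bool list"
  assumes "threshold_seq V E s"
    and "odd (card V)"
    and "hval s = 0"
  shows "\<exists>M. near_perfect_matching V E M"
proof -
  let ?m = "length s"
  obtain v where v: "bij_betw v {..?m} V" "\<forall>x. \<not> E x x"
    "\<forall>i j. i < j \<and> j \<le> ?m \<longrightarrow> (E (v i) (v j) \<longleftrightarrow> s ! (j - 1)) \<and> (E (v j) (v i) \<longleftrightarrow> s ! (j - 1))"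
    using assms(1) unfolding threshold_seq_def by blast
  have inj: "inj_on v {..?m}" and Vi: "v ` {..?m} = V" using v(1) by (auto simp: bij_betw_def)
  have cardV: "card V = Suc ?m" using bij_betw_same_card[OF v(1)] by simp
  have adjE: "adj s i j \<longleftrightarrow> E (v i) (v j)" if "i \<le> ?m" "j \<le> ?m" for i j
  proof (cases i j rule: linorder_cases)
    case less then show ?thesis using v(3) that by (auto simp: adj_def)
  next
    case equal then show ?thesis using v(2) by (simp add: adj_def)
  next
    case greater then show ?thesis using v(3) that by (auto simp: adj_def)
  qed
  obtain M where M: "is_matching {..?m} (adj s) M" "0 \<notin> \<Union>M"
    "\<forall>u\<in>{..?m} - \<Union>M. u = 0 \<or> s ! (u - 1)"
    "card ({..?m} - \<Union>M) + c0 s = 1 + c1 s"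
    using core[OF hval_ballot[OF assms(3)]] by blast
  define U where "U = {..?m} - \<Union>M"
  have cl: "\<forall>x\<in>U. \<forall>y\<in>U. x \<noteq> y \<longrightarrow> adj s x y"
  proof (intro ballI impI)
    fix x y assume xy: "x \<in> U" "y \<in> U" "x \<noteq> y"
    have xm: "x \<le> ?m" "y \<le> ?m" using xy unfolding U_def by auto
    show "adj s x y"
    proof (cases "x < y")
      case True
      then have "y \<noteq> 0" by simp
      then have "s ! (y - 1)" using bspec[OF M(3), of y] xy(2) unfolding U_def by simp
      then show ?thesis using True xm unfolding adj_def by blast
    next
      case False
      then have "y < x" using xy(3) by simp
      then have "x \<noteq> 0" by simp
      then have "s ! (x - 1)" using bspec[OF M(3), of x] xy(1) unfolding U_def by simp
      then show ?thesis using \<open>y < x\<close> xm unfolding adj_def by blast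
    qed
  qed
  obtain M' where M': "is_matching {..?m} (adj s) M'" "\<Union>M \<subseteq> \<Union>M'" "card (U - \<Union>M') = card U mod 2"
  proof -
    have "finite U" "U \<subseteq> {..?m}" "U \<inter> \<Union>M = {}" unfolding U_def by auto
    from clique[OF this(1) M(1) this(2) this(3) cl] show ?thesis using that by blast
  qed
  have len: "length s = c0 s + c1 s" unfolding c0_def c1_def
    using sum_length_filter_compl[of "\<lambda>b. b" s] by simp
  have e: "card U + 2 * c0 s = card V" using M(4) cardV len unfolding U_def by linarith
  have "odd (card U)"
  proof
    assume "even (card U)"
    then have "even (card U + 2 * c0 s)" by simp
    then show False using e assms(2) by simp
  qed
  then have c1U: "card (U - \<Union>M') = 1" using M'(3) by presburger
  have UM': "U - \<Union>M' = {..?m} - \<Union>M'" using M'(2) unfolding U_def by auto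
  have sub: "\<Union>M' \<subseteq> {..?m}" using match_sub[OF M'(1)] .
  define N where "N = (`) v ` M'"
  have match: "is_matching V E N"
    unfolding is_matching_def
  proof (intro conjI ballI impI)
    fix e assume "e \<in> N"
    then obtain e0 where "e0 \<in> M'" "e = v ` e0" unfolding N_def by auto
    then obtain x y where xy: "e0 = {x, y}" "x \<noteq> y" "x \<le> ?m" "y \<le> ?m" "adj s x y"
      using match_edge[OF M'(1) \<open>e0 \<in> M'\<close>] by auto
    have "v x \<noteq> v y" using inj xy by (auto simp: inj_on_def)
    then show "\<exists>x y. e = {x, y} \<and> x \<noteq> y \<and> x \<in> V \<and> y \<in> V \<and> E x y"
      using xy adjE \<open>e = v ` e0\<close> Vi by (intro exI[of _ "v x"] exI[of _ "v y"]) auto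
  next
    fix e e' assume "e \<in> N" "e' \<in> N" "e \<noteq> e'"
    then obtain e0 e0' where e: "e0 \<in> M'" "e0' \<in> M'" "e = v ` e0" "e' = v ` e0'" "e0 \<noteq> e0'"
      unfolding N_def by auto
    then have "e0 \<inter> e0' = {}" using match_disj[OF M'(1)] by blast
    moreover have "e0 \<subseteq> {..?m}" "e0' \<subseteq> {..?m}" using e sub by auto
    ultimately have "v ` e0 \<inter> v ` e0' = v ` (e0 \<inter> e0')" using inj_on_image_Int[OF inj] by metis
    then show "e \<inter> e' = {}" using e \<open>e0 \<inter> e0' = {}\<close> by simp
  qed
  have "V - \<Union>N = v ` ({..?m} - \<Union>M')"
  proof -
    have "\<Union>N = v ` \<Union>M'" unfolding N_def by auto
    then show ?thesis unfolding Vi[symmetric] using inj_on_image_set_diff[OF inj _ sub] by simp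
  qed
  then have "card (V - \<Union>N) = 1" using c1U UM' card_image[OF inj_on_subset[OF inj]] by auto
  then show ?thesis using match unfolding near_perfect_matching_def by blast
qed

end
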